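(* Let $\nu$ be a positive continuous radial function on $\mathbb{D}$, and let $X$ be a Banach space of analytic functions on $\mathbb{D}$ in which the set of polynomials is dense. Let $\varphi, \psi$ be analytic self-maps of $\mathbb{D}$ such that $C_{\varphi} - C_{\psi} : X \to \mathcal{B}_{\nu}$ is bounded. Then the following are equivalent: (a) $C_{\varphi} - C_{\psi}$ is a bounded operator from $X$ into $\mathcal{B}_{\nu,0}$; (b) $\varphi - \psi \in \mathcal{B}_{\nu,0}$ and $\varphi^{2} - \psi^{2} \in \mathcal{B}_{\nu,0}$; (c) $\varphi - \psi \in \mathcal{B}_{\nu,0}$ and $\displaystyle\lim_{|z|\to 1^{-}} \nu(z)|\varphi(z)-\psi(z)|\max\{|\varphi'(z)|, |\psi'(z)|\} = 0$.
   Context: $\mathbb{D}$ is the open unit disk and $H(\mathbb{D})$ the analytic functions on $\mathbb{D}$. For a positive continuous radial function $\nu$ on $\mathbb{D}$ (radial: $\nu(z)=\nu(|z|)$), the Bloch type space $\mathcal{B}_{\nu}$ consists of $f\in H(\mathbb{D})$ with $\sup_{z\in\mathbb{D}}\nu(z)|f'(z)|<\infty$ (normed by $|f(0)|+\sup_{z}\nu(z)|f'(z)|$), and $\mathcal{B}_{\nu,0}$ is the closed subspace of $f\in\mathcal{B}_\nu$ with $\nu(z)|f'(z)|\to 0$ as $|z|\to1^-$. For an analytic self-map $\varphi$ of $\mathbb{D}$, $C_\varphi f = f\circ\varphi$. *)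

theory Defs
  imports "HOL-Analysis.Analysis" "HOL-Computational_Algebra.Polynomial"
begin

text \<open>Unit disk is ball 0 1. Analytic functions on the disk are represented by
total functions complex => complex; elements of the abstract space X are normalised
to vanish outside the disk, so that equality of elements means equality on the disk.\<close>

definition radial_weight :: "(complex \<Rightarrow> real) \<Rightarrow> bool" where
  "radial_weight \<nu> \<longleftrightarrow> continuous_on (ball 0 1) \<nu>
     \<and> (\<forall>z\<in>ball 0 1. \<nu> z > 0)
     \<and> (\<forall>z\<in>ball 0 1. \<nu> z = \<nu> (complex_of_real (cmod z)))"

definition self_map_disk :: "(complex \<Rightarrow> complex) \<Rightarrow> bool" where
  "self_map_disk \<phi> \<longleftrightarrow> \<phi> holomorphic_on ball 0 1 \<and> \<phi> ` ball 0 1 \<subseteq> ball 0 1"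

definition vanishes_at_boundary :: "(complex \<Rightarrow> real) \<Rightarrow> bool" where
  "vanishes_at_boundary g \<longleftrightarrow>
     (\<forall>e>0. \<exists>r<1. \<forall>z. r < cmod z \<and> cmod z < 1 \<longrightarrow> \<bar>g z\<bar> < e)"

definition bloch :: "(complex \<Rightarrow> real) \<Rightarrow> (complex \<Rightarrow> complex) \<Rightarrow> bool" where
  "bloch \<nu> f \<longleftrightarrow> f holomorphic_on ball 0 1
     \<and> (\<exists>C. \<forall>z\<in>ball 0 1. \<nu> z * cmod (deriv f z) \<le> C)"

definition bloch_norm :: "(complex \<Rightarrow> real) \<Rightarrow> (complex \<Rightarrow> complex) \<Rightarrow> real" where
  "bloch_norm \<nu> f = cmod (f 0) + (SUP z\<in>ball 0 1. \<nu> z * cmod (deriv f z))"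

definition little_bloch :: "(complex \<Rightarrow> real) \<Rightarrow> (complex \<Rightarrow> complex) \<Rightarrow> bool" where
  "little_bloch \<nu> f \<longleftrightarrow> bloch \<nu> f \<and> vanishes_at_boundary (\<lambda>z. \<nu> z * cmod (deriv f z))"

definition disk_poly :: "complex poly \<Rightarrow> complex \<Rightarrow> complex" where
  "disk_poly p = (\<lambda>z. if z \<in> ball 0 1 then poly p z else 0)"

definition banach_space_analytic ::
    "(complex \<Rightarrow> complex) set \<Rightarrow> ((complex \<Rightarrow> complex) \<Rightarrow> real) \<Rightarrow> bool" where
  "banach_space_analytic X N \<longleftrightarrow>
     (\<forall>f\<in>X. f holomorphic_on ball 0 1 \<and> (\<forall>z. z \<notin> ball 0 1 \<longrightarrow> f z = 0))
     \<and> (\<lambda>z. 0) \<in> X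
     \<and> (\<forall>f\<in>X. \<forall>g\<in>X. (\<lambda>z. f z + g z) \<in> X)
     \<and> (\<forall>f\<in>X. \<forall>c. (\<lambda>z. c * f z) \<in> X)
     \<and> (\<forall>f\<in>X. N f \<ge> 0 \<and> (N f = 0 \<longleftrightarrow> f = (\<lambda>z. 0)))
     \<and> (\<forall>f\<in>X. \<forall>g\<in>X. N (\<lambda>z. f z + g z) \<le> N f + N g)
     \<and> (\<forall>f\<in>X. \<forall>c. N (\<lambda>z. c * f z) = cmod c * N f)
     \<and> (\<forall>s. (\<forall>n. s n \<in> X) \<longrightarrow>
          (\<forall>e>0. \<exists>M. \<forall>m\<ge>M. \<forall>n\<ge>M. N (\<lambda>z. s m z - s n z) < e) \<longrightarrow>
          (\<exists>f\<in>X. (\<lambda>n. N (\<lambda>z. s n z - f z)) \<longlonglongrightarrow> 0))"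

definition polynomials_dense ::
    "(complex \<Rightarrow> complex) set \<Rightarrow> ((complex \<Rightarrow> complex) \<Rightarrow> real) \<Rightarrow> bool" where
  "polynomials_dense X N \<longleftrightarrow>
     (\<forall>p. disk_poly p \<in> X)
     \<and> (\<forall>f\<in>X. \<forall>e>0. \<exists>p. N (\<lambda>z. f z - disk_poly p z) < e)"

end

theory Submission
  imports Defs
begin


lemma deriv_local:
  assumes "open S" "z \<in> S" "\<And>w. w \<in> S \<Longrightarrow> f w = g w"
  shows "deriv f z = deriv g z"
  apply (rule deriv_cong_ev[OF _ refl])
  using assms eventually_nhds_in_open[OF assms(1,2)] by (auto elim: eventually_mono)

lemma lb_cong:
  assumes "\<And>w. w \<in> ball 0 1 \<Longrightarrow> u w = v w"
  shows "little_bloch \<nu> u = little_bloch \<nu> v"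
proof -
  have d: "deriv u z = deriv v z" if "cmod z < 1" for z
    using deriv_local[of "ball 0 1" z u v] assms that by auto
  have h: "u holomorphic_on ball 0 1 \<longleftrightarrow> v holomorphic_on ball 0 1"
    using holomorphic_cong assms by blast
  show ?thesis unfolding little_bloch_def bloch_def vanishes_at_boundary_def
    using d h by auto
qed

lemma vanish_comb:
  assumes "vanishes_at_boundary g1" "vanishes_at_boundary g2" "a \<ge> 0" "b \<ge> 0"
    and "\<And>z. cmod z < 1 \<Longrightarrow> \<bar>h z\<bar> \<le> a * \<bar>g1 z\<bar> + b * \<bar>g2 z\<bar>"
  shows "vanishes_at_boundary h"
  unfolding vanishes_at_boundary_def
proof (intro allI impI)
  fix e :: real assume e: "e > 0"
  define d where "d = e / (a + b + 1)"
  have d: "d > 0" using e assms by (simp add: d_def)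
  obtain r1 where r1: "r1 < 1" "\<forall>z. r1 < cmod z \<and> cmod z < 1 \<longrightarrow> \<bar>g1 z\<bar> < d"
    using assms(1) d unfolding vanishes_at_boundary_def by blast
  obtain r2 where r2: "r2 < 1" "\<forall>z. r2 < cmod z \<and> cmod z < 1 \<longrightarrow> \<bar>g2 z\<bar> < d"
    using assms(2) d unfolding vanishes_at_boundary_def by blast
  show "\<exists>r<1. \<forall>z. r < cmod z \<and> cmod z < 1 \<longrightarrow> \<bar>h z\<bar> < e"
  proof (intro exI[of _ "max r1 r2"] conjI allI impI)
    show "max r1 r2 < 1" using r1 r2 by simp
    fix z assume z: "max r1 r2 < cmod z \<and> cmod z < 1"
    have "\<bar>h z\<bar> \<le> a * \<bar>g1 z\<bar> + b * \<bar>g2 z\<bar>" using assms(5) z by simp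
    also have "\<dots> \<le> a * d + b * d"
      using r1 r2 z assms(3,4) by (intro add_mono mult_left_mono) auto
    also have "\<dots> < (a + b + 1) * d" using d by (simp add: algebra_simps)
    also have "\<dots> = e" using assms by (simp add: d_def)
    finally show "\<bar>h z\<bar> < e" .
  qed
qed

lemma poly_bound: "\<exists>B>0. \<forall>x. cmod x \<le> 1 \<longrightarrow> cmod (poly q x) \<le> B"
proof -
  have "compact (poly q ` cball 0 1)"
    by (intro compact_continuous_image continuous_intros) auto
  then obtain B where "B > 0" "\<forall>y\<in>poly q ` cball 0 1. cmod y \<le> B"
    using compact_imp_bounded bounded_pos by metis
  then show ?thesis by auto
qed

lemma poly_lip: "\<exists>L\<ge>0. \<forall>x y. cmod x < 1 \<longrightarrow> cmod y < 1 \<longrightarrow> cmod (poly q x - poly q y) \<le> L * cmod (x - y)"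
proof -
  obtain B where B: "B > 0" "\<forall>x. cmod x \<le> 1 \<longrightarrow> cmod (poly (pderiv q) x) \<le> B"
    using poly_bound by blast
  have "cmod (poly q x - poly q y) \<le> B * cmod (x - y)" if "cmod x < 1" "cmod y < 1" for x y
  proof -
    have "\<And>z. (poly q has_field_derivative poly (pderiv q) z) (at z within ball 0 1)"
      using poly_DERIV[of q] by (auto intro: has_field_derivative_at_within)
    then show ?thesis using field_differentiable_bound[of "ball 0 1" "poly q" "poly (pderiv q)" B x y] that B
      by auto
  qed
  then show ?thesis using B by (intro exI[of _ B]) auto
qed

lemma bloch_norm_ge:
  assumes "bloch \<nu> u" "z \<in> ball 0 1"
  shows "\<nu> z * cmod (deriv u z) \<le> bloch_norm \<nu> u"
proof -
  obtain C where "\<forall>z\<in>ball 0 1. \<nu> z * cmod (deriv u z) \<le> C" using assms unfolding bloch_def by blast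
  then have "bdd_above ((\<lambda>z. \<nu> z * cmod (deriv u z)) ` ball 0 1)" by (auto intro: bdd_aboveI2)
  then have "\<nu> z * cmod (deriv u z) \<le> (SUP z\<in>ball 0 1. \<nu> z * cmod (deriv u z))"
    using assms(2) by (rule cSUP_upper2) simp
  then show ?thesis unfolding bloch_norm_def by (smt (verit) norm_ge_zero)
qed



lemma bloch_cong:
  assumes "\<And>w. w \<in> ball 0 1 \<Longrightarrow> u w = v w"
  shows "bloch \<nu> u = bloch \<nu> v"
proof -
  have d: "deriv u z = deriv v z" if "z \<in> ball 0 1" for z
    using deriv_local[of "ball 0 1" z u v] assms that by auto
  have h: "u holomorphic_on ball 0 1 \<longleftrightarrow> v holomorphic_on ball 0 1"
    using holomorphic_cong assms by blast
  show ?thesis unfolding bloch_def using d h by auto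
qed

lemma ineqs:
  fixes a b a' b' :: complex
  assumes "cmod a \<le> 1" "cmod b \<le> 1"
  shows "cmod (a*a' - b*b') \<le> cmod (a' - b') + cmod (a - b) * cmod b'"
    and "cmod (a - b) * cmod b' \<le> cmod (a*a' - b*b') + cmod (a' - b')"
    and "cmod (a - b) * cmod a' \<le> cmod (a*a' - b*b') + cmod (a' - b')"
proof -
  have e1: "a*a' - b*b' = a*(a'-b') + (a-b)*b'" by (simp add: algebra_simps)
  have e2: "(a-b)*b' = (a*a' - b*b') - a*(a'-b')" by (simp add: algebra_simps)
  have e3: "(a-b)*a' = (a*a' - b*b') - b*(a'-b')" by (simp add: algebra_simps)
  have m1: "cmod (a*(a'-b')) \<le> cmod (a'-b')"
    using assms by (simp add: norm_mult mult_left_le_one_le)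
  have m2: "cmod (b*(a'-b')) \<le> cmod (a'-b')"
    using assms by (simp add: norm_mult mult_left_le_one_le)
  show "cmod (a*a' - b*b') \<le> cmod (a' - b') + cmod (a - b) * cmod b'"
    unfolding e1 using norm_triangle_ineq[of "a*(a'-b')" "(a-b)*b'"] m1 by (simp add: norm_mult)
  show "cmod (a - b) * cmod b' \<le> cmod (a*a' - b*b') + cmod (a' - b')"
    using norm_triangle_ineq4[of "a*a' - b*b'" "a*(a'-b')"] m1 e2 by (simp add: norm_mult[symmetric])
  show "cmod (a - b) * cmod a' \<le> cmod (a*a' - b*b') + cmod (a' - b')"
    using norm_triangle_ineq4[of "a*a' - b*b'" "b*(a'-b')"] m2 e3 by (simp add: norm_mult[symmetric])
qed



theorem theorem3p1:
  fixes \<nu> :: "complex \<Rightarrow> real"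
    and X :: "(complex \<Rightarrow> complex) set" and N :: "(complex \<Rightarrow> complex) \<Rightarrow> real"
    and \<phi> \<psi> :: "complex \<Rightarrow> complex"
  assumes "radial_weight \<nu>"
    and "banach_space_analytic X N"
    and "polynomials_dense X N"
    and "self_map_disk \<phi>" and "self_map_disk \<psi>"
    and bdd: "(\<forall>f\<in>X. bloch \<nu> (\<lambda>z. f (\<phi> z) - f (\<psi> z)))
              \<and> (\<exists>M. \<forall>f\<in>X. bloch_norm \<nu> (\<lambda>z. f (\<phi> z) - f (\<psi> z)) \<le> M * N f)"
  shows "(((\<forall>f\<in>X. little_bloch \<nu> (\<lambda>z. f (\<phi> z) - f (\<psi> z)))
           \<and> (\<exists>M. \<forall>f\<in>X. bloch_norm \<nu> (\<lambda>z. f (\<phi> z) - f (\<psi> z)) \<le> M * N f))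
         \<longleftrightarrow> (little_bloch \<nu> (\<lambda>z. \<phi> z - \<psi> z)
              \<and> little_bloch \<nu> (\<lambda>z. (\<phi> z)\<^sup>2 - (\<psi> z)\<^sup>2)))
       \<and> ((little_bloch \<nu> (\<lambda>z. \<phi> z - \<psi> z)
              \<and> little_bloch \<nu> (\<lambda>z. (\<phi> z)\<^sup>2 - (\<psi> z)\<^sup>2))
         \<longleftrightarrow> (little_bloch \<nu> (\<lambda>z. \<phi> z - \<psi> z)
              \<and> vanishes_at_boundary
                  (\<lambda>z. \<nu> z * cmod (\<phi> z - \<psi> z) * max (cmod (deriv \<phi> z)) (cmod (deriv \<psi> z)))))"
proof -
  define D :: "complex set" where "D = ball 0 1"
  have oD: "open D" unfolding D_def by simp
  have hphi: "\<phi> holomorphic_on D" "\<And>z. z \<in> D \<Longrightarrow> \<phi> z \<in> D"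
    using assms(4) unfolding self_map_disk_def D_def by blast+
  have hpsi: "\<psi> holomorphic_on D" "\<And>z. z \<in> D \<Longrightarrow> \<psi> z \<in> D"
    using assms(5) unfolding self_map_disk_def D_def by blast+
  have nupos: "\<And>z. z \<in> D \<Longrightarrow> \<nu> z > 0" using assms(1) unfolding radial_weight_def D_def by blast
  have Dm: "z \<in> D \<longleftrightarrow> cmod z < 1" for z unfolding D_def by simp
  have dphi: "\<And>z. z \<in> D \<Longrightarrow> (\<phi> has_field_derivative deriv \<phi> z) (at z)"
    by (rule holomorphic_derivI[OF hphi(1) oD])
  have dpsi: "\<And>z. z \<in> D \<Longrightarrow> (\<psi> has_field_derivative deriv \<psi> z) (at z)"
    by (rule holomorphic_derivI[OF hpsi(1) oD])
  have d1: "deriv (\<lambda>z. \<phi> z - \<psi> z) z = deriv \<phi> z - deriv \<psi> z" if "z \<in> D" for z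
    by (rule DERIV_imp_deriv) (intro DERIV_diff dphi dpsi that)
  have d2: "deriv (\<lambda>z. (\<phi> z)\<^sup>2 - (\<psi> z)\<^sup>2) z = 2 * (\<phi> z * deriv \<phi> z - \<psi> z * deriv \<psi> z)" if "z \<in> D" for z
  proof -
    have "((\<lambda>z. \<phi> z * \<phi> z - \<psi> z * \<psi> z) has_field_derivative
        (deriv \<phi> z * \<phi> z + deriv \<phi> z * \<phi> z) - (deriv \<psi> z * \<psi> z + deriv \<psi> z * \<psi> z)) (at z)"
      by (intro DERIV_diff DERIV_mult dphi dpsi that)
    then have "deriv (\<lambda>z. \<phi> z * \<phi> z - \<psi> z * \<psi> z) z =
        (deriv \<phi> z * \<phi> z + deriv \<phi> z * \<phi> z) - (deriv \<psi> z * \<psi> z + deriv \<psi> z * \<psi> z)"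
      by (rule DERIV_imp_deriv)
    then show ?thesis by (simp add: power2_eq_square algebra_simps)
  qed
  have dp: "deriv (\<lambda>z. disk_poly p (\<phi> z) - disk_poly p (\<psi> z)) z
        = poly (pderiv p) (\<phi> z) * deriv \<phi> z - poly (pderiv p) (\<psi> z) * deriv \<psi> z" if "z \<in> D" for z p
  proof -
    have "deriv (\<lambda>z. disk_poly p (\<phi> z) - disk_poly p (\<psi> z)) z = deriv (\<lambda>z. poly p (\<phi> z) - poly p (\<psi> z)) z"
      by (rule deriv_local[OF oD that]) (use hphi hpsi in \<open>auto simp: disk_poly_def D_def\<close>)
    also have "\<dots> = poly (pderiv p) (\<phi> z) * deriv \<phi> z - poly (pderiv p) (\<psi> z) * deriv \<psi> z"
      by (rule DERIV_imp_deriv) (intro DERIV_diff DERIV_chain2[OF poly_DERIV] dphi dpsi that)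
    finally show ?thesis .
  qed
  have XB: "banach_space_analytic X N" by fact
  have Xp: "disk_poly p \<in> X" for p using assms(3) unfolding polynomials_dense_def by blast
  have eq1: "disk_poly [:0,1:] (\<phi> w) - disk_poly [:0,1:] (\<psi> w) = \<phi> w - \<psi> w" if "w \<in> ball 0 1" for w
    using hphi hpsi that by (auto simp: disk_poly_def D_def)
  have eq2: "disk_poly [:0,0,1:] (\<phi> w) - disk_poly [:0,0,1:] (\<psi> w) = (\<phi> w)\<^sup>2 - (\<psi> w)\<^sup>2" if "w \<in> ball 0 1" for w
    using hphi hpsi that by (auto simp: disk_poly_def D_def power2_eq_square)
  have bl1: "bloch \<nu> (\<lambda>z. \<phi> z - \<psi> z)"
  proof -
    have "bloch \<nu> (\<lambda>w. disk_poly [:0,1:] (\<phi> w) - disk_poly [:0,1:] (\<psi> w)) = bloch \<nu> (\<lambda>w. \<phi> w - \<psi> w)"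
      by (rule bloch_cong) (rule eq1)
    then show ?thesis using bdd Xp[of "[:0,1:]"] by blast
  qed
  have bl2: "bloch \<nu> (\<lambda>z. (\<phi> z)\<^sup>2 - (\<psi> z)\<^sup>2)"
  proof -
    have "bloch \<nu> (\<lambda>w. disk_poly [:0,0,1:] (\<phi> w) - disk_poly [:0,0,1:] (\<psi> w)) = bloch \<nu> (\<lambda>w. (\<phi> w)\<^sup>2 - (\<psi> w)\<^sup>2)"
      by (rule bloch_cong) (rule eq2)
    then show ?thesis using bdd Xp[of "[:0,0,1:]"] by blast
  qed
  define A where "A z = \<nu> z * cmod (deriv \<phi> z - deriv \<psi> z)" for z
  define B where "B z = \<nu> z * cmod (\<phi> z * deriv \<phi> z - \<psi> z * deriv \<psi> z)" for z
  define P where "P z = \<nu> z * cmod (\<phi> z - \<psi> z) * cmod (deriv \<phi> z)" for z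
  define Q where "Q z = \<nu> z * cmod (\<phi> z - \<psi> z) * cmod (deriv \<psi> z)" for z
  define H where "H z = \<nu> z * cmod (\<phi> z - \<psi> z) * max (cmod (deriv \<phi> z)) (cmod (deriv \<psi> z))" for z
  have absA: "\<bar>A z\<bar> = A z" if "z \<in> D" for z using nupos[OF that] by (simp add: A_def)
  have absB: "\<bar>B z\<bar> = B z" if "z \<in> D" for z using nupos[OF that] by (simp add: B_def)
  have absP: "\<bar>P z\<bar> = P z" if "z \<in> D" for z using nupos[OF that] by (simp add: P_def)
  have absQ: "\<bar>Q z\<bar> = Q z" if "z \<in> D" for z using nupos[OF that] by (simp add: Q_def)
  have absH: "\<bar>H z\<bar> = H z" if "z \<in> D" for z using nupos[OF that] unfolding H_def by (intro abs_of_nonneg mult_nonneg_nonneg) (auto simp: le_max_iff_disj)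
  have n1: "cmod (\<phi> z) \<le> 1" "cmod (\<psi> z) \<le> 1" if "z \<in> D" for z
    using hphi(2)[OF that] hpsi(2)[OF that] by (auto simp: D_def)
  have iB: "B z \<le> A z + Q z" and iQ: "Q z \<le> B z + A z" and iP: "P z \<le> B z + A z" if "z \<in> D" for z
  proof -
    note I = ineqs[OF n1[OF that], where a'="deriv \<phi> z" and b'="deriv \<psi> z"]
    have nn: "\<nu> z \<ge> 0" using nupos[OF that] by simp
    show "B z \<le> A z + Q z" using mult_left_mono[OF I(1) nn]
      by (simp add: A_def B_def Q_def algebra_simps)
    show "Q z \<le> B z + A z" using mult_left_mono[OF I(2) nn]
      by (simp add: A_def B_def Q_def algebra_simps)
    show "P z \<le> B z + A z" using mult_left_mono[OF I(3) nn]
      by (simp add: A_def B_def P_def algebra_simps)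
  qed
  have iH: "H z \<le> P z + Q z" "Q z \<le> H z" if "z \<in> D" for z
  proof -
    have nn: "\<nu> z * cmod (\<phi> z - \<psi> z) \<ge> 0" using nupos[OF that] by simp
    show "H z \<le> P z + Q z" unfolding H_def P_def Q_def
      using nn by (simp add: max_def distrib_left[symmetric] mult_left_mono)
    show "Q z \<le> H z" unfolding H_def Q_def
      using nn by (simp add: mult_left_mono)
  qed
  have lb1A: "little_bloch \<nu> (\<lambda>z. \<phi> z - \<psi> z) \<longleftrightarrow> vanishes_at_boundary A"
  proof -
    have "\<nu> z * cmod (deriv (\<lambda>z. \<phi> z - \<psi> z) z) = A z" if "cmod z < 1" for z
      using d1[of z] that by (simp add: A_def Dm)
    then have "vanishes_at_boundary (\<lambda>z. \<nu> z * cmod (deriv (\<lambda>z. \<phi> z - \<psi> z) z)) = vanishes_at_boundary A"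
      unfolding vanishes_at_boundary_def by auto
    then show ?thesis unfolding little_bloch_def using bl1 by simp
  qed
  have lb2B: "little_bloch \<nu> (\<lambda>z. (\<phi> z)\<^sup>2 - (\<psi> z)\<^sup>2) \<longleftrightarrow> vanishes_at_boundary B"
  proof -
    let ?G = "\<lambda>z. \<nu> z * cmod (deriv (\<lambda>z. (\<phi> z)\<^sup>2 - (\<psi> z)\<^sup>2) z)"
    have g: "?G z = 2 * B z" if "cmod z < 1" for z
    proof -
      have zD: "z \<in> D" using that Dm by simp
      have "cmod (deriv (\<lambda>z. (\<phi> z)\<^sup>2 - (\<psi> z)\<^sup>2) z) = cmod (2 * (\<phi> z * deriv \<phi> z - \<psi> z * deriv \<psi> z))"
        by (simp only: d2[OF zD])
      also have "\<dots> = 2 * cmod (\<phi> z * deriv \<phi> z - \<psi> z * deriv \<psi> z)"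
        by (simp only: norm_mult) simp
      finally show ?thesis by (simp add: B_def)
    qed
    have "vanishes_at_boundary ?G = vanishes_at_boundary B"
    proof
      assume vG: "vanishes_at_boundary ?G"
      show "vanishes_at_boundary B"
        by (rule vanish_comb[where ?g1.0="?G" and ?g2.0="?G" and a="1/2" and b=0, OF vG vG]) (auto simp: g abs_mult)
    next
      assume vB: "vanishes_at_boundary B"
      show "vanishes_at_boundary ?G"
        by (rule vanish_comb[where ?g1.0=B and ?g2.0=B and a=2 and b=0, OF vB vB]) (auto simp: g abs_mult)
    qed
    then show ?thesis unfolding little_bloch_def using bl2 by simp
  qed
  have BC: "(little_bloch \<nu> (\<lambda>z. \<phi> z - \<psi> z) \<and> little_bloch \<nu> (\<lambda>z. (\<phi> z)\<^sup>2 - (\<psi> z)\<^sup>2))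
         \<longleftrightarrow> (little_bloch \<nu> (\<lambda>z. \<phi> z - \<psi> z) \<and> vanishes_at_boundary H)"
  proof (cases "vanishes_at_boundary A")
    case False then show ?thesis using lb1A by simp
  next
    case vA: True
    have "vanishes_at_boundary B \<longleftrightarrow> vanishes_at_boundary H"
    proof
      assume vB: "vanishes_at_boundary B"
      have vP: "vanishes_at_boundary P"
        by (rule vanish_comb[OF vB vA, of 1 1]) (use iP absA absB absP Dm in auto)
      have vQ: "vanishes_at_boundary Q"
        by (rule vanish_comb[OF vB vA, of 1 1]) (use iQ absA absB absQ Dm in auto)
      show "vanishes_at_boundary H"
        by (rule vanish_comb[OF vP vQ, of 1 1]) (use iH absP absQ absH Dm in auto)
    next
      assume vH: "vanishes_at_boundary H"
      have vQ: "vanishes_at_boundary Q"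
        by (rule vanish_comb[OF vH vH, of 1 0]) (use iH absQ absH Dm in auto)
      show "vanishes_at_boundary B"
        by (rule vanish_comb[OF vA vQ, of 1 1]) (use iB absA absB absQ Dm in auto)
    qed
    then show ?thesis using lb2B H_def by simp
  qed
  have polyvan: "vanishes_at_boundary (\<lambda>z. \<nu> z * cmod (deriv (\<lambda>z. disk_poly p (\<phi> z) - disk_poly p (\<psi> z)) z))"
    if vA: "vanishes_at_boundary A" and vQ: "vanishes_at_boundary Q" for p
  proof -
    obtain K where K: "K > 0" "\<forall>x. cmod x \<le> 1 \<longrightarrow> cmod (poly (pderiv p) x) \<le> K"
      using poly_bound by blast
    obtain L where L: "L \<ge> 0" "\<forall>x y. cmod x < 1 \<longrightarrow> cmod y < 1 \<longrightarrow>
        cmod (poly (pderiv p) x - poly (pderiv p) y) \<le> L * cmod (x - y)"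
      using poly_lip by blast
    show ?thesis
    proof (rule vanish_comb[OF vA vQ, of K L])
      fix z :: complex assume z: "cmod z < 1"
      then have zD: "z \<in> D" by (simp add: Dm)
      define a where "a = \<phi> z" define b where "b = \<psi> z"
      define a' where "a' = deriv \<phi> z" define b' where "b' = deriv \<psi> z"
      define q where "q = pderiv p"
      have ab: "cmod a < 1" "cmod b < 1" using hphi(2)[OF zD] hpsi(2)[OF zD] by (auto simp: a_def b_def Dm)
      have e: "poly q a * a' - poly q b * b' = poly q a * (a' - b') + (poly q a - poly q b) * b'"
        by (simp add: algebra_simps)
      have "cmod (poly q a * a' - poly q b * b') \<le> cmod (poly q a * (a' - b')) + cmod ((poly q a - poly q b) * b')"
        unfolding e by (rule norm_triangle_ineq)
      also have "\<dots> \<le> K * cmod (a' - b') + L * cmod (a - b) * cmod b'"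
        unfolding norm_mult
        using K L ab by (intro add_mono mult_right_mono) (auto simp: q_def)
      finally have main: "cmod (poly q a * a' - poly q b * b') \<le> K * cmod (a' - b') + L * cmod (a - b) * cmod b'" .
      have nn: "\<nu> z \<ge> 0" using nupos[OF zD] by simp
      have "\<bar>\<nu> z * cmod (deriv (\<lambda>z. disk_poly p (\<phi> z) - disk_poly p (\<psi> z)) z)\<bar>
           = \<nu> z * cmod (poly q a * a' - poly q b * b')"
        using dp[OF zD, of p] nn by (simp add: a_def b_def a'_def b'_def q_def)
      also have "\<dots> \<le> \<nu> z * (K * cmod (a' - b') + L * cmod (a - b) * cmod b')"
        using main nn by (rule mult_left_mono)
      also have "\<dots> = K * A z + L * Q z"
        by (simp add: A_def Q_def a_def b_def a'_def b'_def algebra_simps)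
      also have "\<dots> = K * \<bar>A z\<bar> + L * \<bar>Q z\<bar>" using absA[OF zD] absQ[OF zD] by simp
      finally show "\<bar>\<nu> z * cmod (deriv (\<lambda>z. disk_poly p (\<phi> z) - disk_poly p (\<psi> z)) z)\<bar>
           \<le> K * \<bar>A z\<bar> + L * \<bar>Q z\<bar>" .
    qed (use K L in auto)
  qed
  have AB: "(\<forall>f\<in>X. little_bloch \<nu> (\<lambda>z. f (\<phi> z) - f (\<psi> z)))
         \<longleftrightarrow> (little_bloch \<nu> (\<lambda>z. \<phi> z - \<psi> z) \<and> little_bloch \<nu> (\<lambda>z. (\<phi> z)\<^sup>2 - (\<psi> z)\<^sup>2))"
  proof
    assume a: "\<forall>f\<in>X. little_bloch \<nu> (\<lambda>z. f (\<phi> z) - f (\<psi> z))"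
    show "little_bloch \<nu> (\<lambda>z. \<phi> z - \<psi> z) \<and> little_bloch \<nu> (\<lambda>z. (\<phi> z)\<^sup>2 - (\<psi> z)\<^sup>2)"
    proof -
      have "little_bloch \<nu> (\<lambda>w. disk_poly [:0,1:] (\<phi> w) - disk_poly [:0,1:] (\<psi> w)) = little_bloch \<nu> (\<lambda>w. \<phi> w - \<psi> w)"
        by (rule lb_cong) (rule eq1)
      moreover have "little_bloch \<nu> (\<lambda>w. disk_poly [:0,0,1:] (\<phi> w) - disk_poly [:0,0,1:] (\<psi> w)) = little_bloch \<nu> (\<lambda>w. (\<phi> w)\<^sup>2 - (\<psi> w)\<^sup>2)"
        by (rule lb_cong) (rule eq2)
      ultimately show ?thesis using a Xp[of "[:0,1:]"] Xp[of "[:0,0,1:]"] by blast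
    qed
  next
    assume b: "little_bloch \<nu> (\<lambda>z. \<phi> z - \<psi> z) \<and> little_bloch \<nu> (\<lambda>z. (\<phi> z)\<^sup>2 - (\<psi> z)\<^sup>2)"
    then have vA: "vanishes_at_boundary A" using lb1A by simp
    have vH: "vanishes_at_boundary H" using b BC H_def by simp
    have vQ: "vanishes_at_boundary Q"
      by (rule vanish_comb[OF vH vH, of 1 0]) (use iH absQ absH Dm in auto)
    have pv: "vanishes_at_boundary (\<lambda>z. \<nu> z * cmod (deriv (\<lambda>z. disk_poly p (\<phi> z) - disk_poly p (\<psi> z)) z))" for p
      using polyvan[OF vA vQ] .
    obtain M where M: "\<forall>f\<in>X. bloch_norm \<nu> (\<lambda>z. f (\<phi> z) - f (\<psi> z)) \<le> M * N f" using bdd by blast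
    show "\<forall>f\<in>X. little_bloch \<nu> (\<lambda>z. f (\<phi> z) - f (\<psi> z))"
    proof
      fix f assume fX: "f \<in> X"
      show "little_bloch \<nu> (\<lambda>z. f (\<phi> z) - f (\<psi> z))"
        unfolding little_bloch_def
      proof (intro conjI)
        show "bloch \<nu> (\<lambda>z. f (\<phi> z) - f (\<psi> z))" using bdd fX by blast
        show "vanishes_at_boundary (\<lambda>z. \<nu> z * cmod (deriv (\<lambda>z. f (\<phi> z) - f (\<psi> z)) z))"
          unfolding vanishes_at_boundary_def
        proof (intro allI impI)
          fix e :: real assume e: "e > 0"
          define M' where "M' = \<bar>M\<bar> + 1"
          have M': "M' > 0" by (simp add: M'_def)
          obtain p where p: "N (\<lambda>z. f z - disk_poly p z) < e / (2 * M')"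
            using assms(3) fX e M' unfolding polynomials_dense_def by (meson divide_pos_pos mult_pos_pos zero_less_numeral)
          define g where "g = (\<lambda>z. f z - disk_poly p z)"
          have gX: "g \<in> X"
          proof -
            have neg: "(\<lambda>z. (-1) * disk_poly p z) \<in> X" using XB Xp unfolding banach_space_analytic_def by blast
            have add: "\<forall>f\<in>X. \<forall>g\<in>X. (\<lambda>z. f z + g z) \<in> X"
              using XB unfolding banach_space_analytic_def by blast
            have "(\<lambda>z. f z + (\<lambda>z. (-1) * disk_poly p z) z) \<in> X"
              by (rule add[rule_format, OF fX neg])
            then show ?thesis unfolding g_def by simp
          qed
          have Ng: "N g \<ge> 0" using XB gX unfolding banach_space_analytic_def by blast
          have bg: "bloch \<nu> (\<lambda>z. g (\<phi> z) - g (\<psi> z))" using bdd gX by blast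
          have bp: "bloch \<nu> (\<lambda>z. disk_poly p (\<phi> z) - disk_poly p (\<psi> z))" using bdd Xp by blast
          have normg: "bloch_norm \<nu> (\<lambda>z. g (\<phi> z) - g (\<psi> z)) < e / 2"
          proof -
            have "bloch_norm \<nu> (\<lambda>z. g (\<phi> z) - g (\<psi> z)) \<le> M * N g" using M gX by blast
            also have "\<dots> \<le> M' * N g" using Ng by (intro mult_right_mono) (auto simp: M'_def)
            also have "\<dots> < M' * (e / (2 * M'))" using p M' unfolding g_def by (intro mult_strict_left_mono)
            also have "\<dots> = e / 2" using M' by simp
            finally show ?thesis .
          qed
          obtain r where r: "r < 1" "\<forall>z. r < cmod z \<and> cmod z < 1 \<longrightarrow>
              \<bar>\<nu> z * cmod (deriv (\<lambda>z. disk_poly p (\<phi> z) - disk_poly p (\<psi> z)) z)\<bar> < e / 2"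
            using pv[of p] e unfolding vanishes_at_boundary_def by (meson half_gt_zero)
          show "\<exists>r<1. \<forall>z. r < cmod z \<and> cmod z < 1 \<longrightarrow> \<bar>\<nu> z * cmod (deriv (\<lambda>z. f (\<phi> z) - f (\<psi> z)) z)\<bar> < e"
          proof (intro exI[of _ r] conjI allI impI)
            show "r < 1" by fact
            fix z assume z: "r < cmod z \<and> cmod z < 1"
            then have zD: "z \<in> ball 0 1" by simp
            have nn: "\<nu> z \<ge> 0" using nupos zD D_def by fastforce
            have fd1: "(\<lambda>z. g (\<phi> z) - g (\<psi> z)) field_differentiable at z"
              using bg zD unfolding bloch_def by (meson holomorphic_on_imp_differentiable_at open_ball)
            have fd2: "(\<lambda>z. disk_poly p (\<phi> z) - disk_poly p (\<psi> z)) field_differentiable at z"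
              using bp zD unfolding bloch_def by (meson holomorphic_on_imp_differentiable_at open_ball)
            have fe: "(\<lambda>z. f (\<phi> z) - f (\<psi> z)) = (\<lambda>w. (\<lambda>z. g (\<phi> z) - g (\<psi> z)) w + (\<lambda>z. disk_poly p (\<phi> z) - disk_poly p (\<psi> z)) w)"
              by (simp add: g_def fun_eq_iff algebra_simps)
            have dd: "deriv (\<lambda>z. f (\<phi> z) - f (\<psi> z)) z = deriv (\<lambda>z. g (\<phi> z) - g (\<psi> z)) z + deriv (\<lambda>z. disk_poly p (\<phi> z) - disk_poly p (\<psi> z)) z"
              unfolding fe by (rule deriv_add[OF fd1 fd2])
            have "\<bar>\<nu> z * cmod (deriv (\<lambda>z. f (\<phi> z) - f (\<psi> z)) z)\<bar> = \<nu> z * cmod (deriv (\<lambda>z. f (\<phi> z) - f (\<psi> z)) z)"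
              using nn by simp
            also have "\<dots> \<le> \<nu> z * cmod (deriv (\<lambda>z. g (\<phi> z) - g (\<psi> z)) z) + \<nu> z * cmod (deriv (\<lambda>z. disk_poly p (\<phi> z) - disk_poly p (\<psi> z)) z)"
              unfolding dd distrib_left[symmetric] using nn by (intro mult_left_mono norm_triangle_ineq)
            also have "\<dots> < e / 2 + e / 2"
              using bloch_norm_ge[OF bg zD] normg r z by (intro add_le_less_mono) auto
            finally show "\<bar>\<nu> z * cmod (deriv (\<lambda>z. f (\<phi> z) - f (\<psi> z)) z)\<bar> < e" by simp
          qed
        qed
      qed
    qed
  qed
  have Hf: "H = (\<lambda>z. \<nu> z * cmod (\<phi> z - \<psi> z) * max (cmod (deriv \<phi> z)) (cmod (deriv \<psi> z)))"
    by (rule ext) (simp add: H_def)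
  show ?thesis using AB BC bdd unfolding Hf by blast
qed

end
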